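(* Let $(V,\langle\cdot,\cdot\rangle)$ be a pseudo-Euclidean real vector space of signature $(k,l)$ with $k\ge2$, $l\ge2$, let $Z\subseteq V$ be a subspace with $q^+(Z)\ge1$, and let $H\subseteq V$ be a positive $(k-1)$-plane. Then $H^\perp$ is a Minkowski space of signature $(1,l)$; let $C^+(H^\perp)$ be either one of the two connected components of $\{w\in H^\perp:\langle w,w\rangle\ge0\}\setminus\{0\}$. The following are equivalent: (i) $H$ is $Z$-extendable; (ii) $q^+(H+Z)=k$; (iii) $q^+((H+Z)\cap H^\perp)\ge1$; (iv) there exists $z\in Z$ with $\langle z,u\rangle>0$ for all $u\in C^+(H^\perp)$; (v) $Z^\perp\cap C^+(H^\perp)=\emptyset$.
   Context: A pseudo-Euclidean space of signature $(k,l)$ is a finite-dimensional real vector space with a symmetric non-degenerate bilinear form whose Sylvester diagonal form has $k$ entries $+1$ and $l$ entries $-1$. For a subspace $L$, $q^+(L)$ denotes the number of $+1$'s in a diagonalization of the restriction of the form to $L$, and $L^\perp$ is the orthogonal complement in $V$. A positive $r$-plane is an $r$-dimensional subspace on which the form is positive definite. $H$ is $Z$-extendable if there is $z\in Z$ with $H+\mathbb{R}z$ a positive $k$-plane. *)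

theory Defs
  imports "HOL-Analysis.Analysis"
begin

text \<open>A (finite-dimensional) real vector space V is modelled as a type of class
euclidean_space (carrying its standard topology); the pseudo-Euclidean form is B.\<close>

definition pseudo_euclidean_form :: "('a::euclidean_space \<Rightarrow> 'a \<Rightarrow> real) \<Rightarrow> bool" where
  "pseudo_euclidean_form B \<longleftrightarrow> bilinear B \<and> (\<forall>x y. B x y = B y x)
     \<and> (\<forall>x. (\<forall>y. B x y = 0) \<longrightarrow> x = 0)"

definition diag_basis :: "('a::euclidean_space \<Rightarrow> 'a \<Rightarrow> real) \<Rightarrow> 'a set \<Rightarrow> 'a set \<Rightarrow> bool" where
  "diag_basis B L Bs \<longleftrightarrow> finite Bs \<and> independent Bs \<and> span Bs = L
     \<and> (\<forall>b\<in>Bs. \<forall>c\<in>Bs. b \<noteq> c \<longrightarrow> B b c = 0)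
     \<and> (\<forall>b\<in>Bs. B b b = 1 \<or> B b b = -1 \<or> B b b = 0)"

definition q_plus :: "('a::euclidean_space \<Rightarrow> 'a \<Rightarrow> real) \<Rightarrow> 'a set \<Rightarrow> nat" where
  "q_plus B L = card {b \<in> (SOME Bs. diag_basis B L Bs). B b b = 1}"

definition q_minus :: "('a::euclidean_space \<Rightarrow> 'a \<Rightarrow> real) \<Rightarrow> 'a set \<Rightarrow> nat" where
  "q_minus B L = card {b \<in> (SOME Bs. diag_basis B L Bs). B b b = -1}"

definition has_signature :: "('a::euclidean_space \<Rightarrow> 'a \<Rightarrow> real) \<Rightarrow> nat \<Rightarrow> nat \<Rightarrow> bool" where
  "has_signature B k l \<longleftrightarrow> pseudo_euclidean_form B \<and> q_plus B UNIV = k \<and> q_minus B UNIV = l"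

definition orth :: "('a::euclidean_space \<Rightarrow> 'a \<Rightarrow> real) \<Rightarrow> 'a set \<Rightarrow> 'a set" where
  "orth B L = {v. \<forall>u\<in>L. B u v = 0}"

definition positive_plane :: "('a::euclidean_space \<Rightarrow> 'a \<Rightarrow> real) \<Rightarrow> nat \<Rightarrow> 'a set \<Rightarrow> bool" where
  "positive_plane B r P \<longleftrightarrow> subspace P \<and> dim P = r \<and> (\<forall>x\<in>P. x \<noteq> 0 \<longrightarrow> B x x > 0)"

definition set_plus :: "'a::euclidean_space set \<Rightarrow> 'a set \<Rightarrow> 'a set" where
  "set_plus A C = {x + y | x y. x \<in> A \<and> y \<in> C}"

definition extendable :: "('a::euclidean_space \<Rightarrow> 'a \<Rightarrow> real) \<Rightarrow> nat \<Rightarrow> 'a set \<Rightarrow> 'a set \<Rightarrow> bool" where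
  "extendable B k Z H \<longleftrightarrow> (\<exists>z\<in>Z. positive_plane B k (set_plus H {t *\<^sub>R z | t. True}))"

definition minkowski_subspace :: "('a::euclidean_space \<Rightarrow> 'a \<Rightarrow> real) \<Rightarrow> nat \<Rightarrow> 'a set \<Rightarrow> bool" where
  "minkowski_subspace B l M \<longleftrightarrow> subspace M \<and> (\<forall>x\<in>M. (\<forall>y\<in>M. B x y = 0) \<longrightarrow> x = 0)
     \<and> q_plus B M = 1 \<and> q_minus B M = l"

definition causal_cone :: "('a::euclidean_space \<Rightarrow> 'a \<Rightarrow> real) \<Rightarrow> 'a set \<Rightarrow> 'a set" where
  "causal_cone B M = {w \<in> M. B w w \<ge> 0} - {0}"

end

theory Submission
  imports Defs
begin

lemma bil_sum_orth:
  fixes B :: "'a::euclidean_space \<Rightarrow> 'a \<Rightarrow> real"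
  assumes bl: "bilinear B" and fin: "finite S"
    and orth: "\<forall>b\<in>S. \<forall>c\<in>S. b \<noteq> c \<longrightarrow> B b c = 0"
  shows "B (\<Sum>b\<in>S. c b *\<^sub>R b) (\<Sum>b\<in>S. d b *\<^sub>R b) = (\<Sum>b\<in>S. c b * d b * B b b)"
proof -
  have lin1: "linear (\<lambda>x. B x y)" for y using bl by (simp add: bilinear_def)
  have lin2: "linear (B x)" for x using bl by (simp add: bilinear_def)
  have "B (\<Sum>b\<in>S. c b *\<^sub>R b) y = (\<Sum>b\<in>S. c b * B b y)" for y
    by (simp add: linear_sum[OF lin1[of y]] linear_scale[OF lin1[of y]])
  moreover have "B b (\<Sum>b\<in>S. d b *\<^sub>R b) = d b * B b b" if "b \<in> S" for b
  proof -
    have "B b (\<Sum>b\<in>S. d b *\<^sub>R b) = (\<Sum>a\<in>S. d a * B b a)"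
      by (simp add: linear_sum[OF lin2[of b]] linear_scale[OF lin2[of b]])
    also have "\<dots> = d b * B b b + (\<Sum>a\<in>S-{b}. d a * B b a)"
      using sum.remove[OF fin that] by simp
    also have "(\<Sum>a\<in>S-{b}. d a * B b a) = 0"
      using orth that by (intro sum.neutral) auto
    finally show ?thesis by simp
  qed
  ultimately show ?thesis by (simp add: mult.assoc)
qed

lemma bil_simps:
  fixes B :: "'a::euclidean_space \<Rightarrow> 'a \<Rightarrow> real"
  assumes "bilinear B"
  shows "B (x + y) z = B x z + B y z" "B z (x + y) = B z x + B z y"
    "B (a *\<^sub>R x) z = a * B x z" "B z (a *\<^sub>R x) = a * B z x"
    "B (x - y) z = B x z - B y z" "B z (x - y) = B z x - B z y"
    "B (- x) z = - B x z" "B z (- x) = - B z x"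
    "B 0 z = 0" "B z 0 = 0"
  using assms by (simp_all add: bilinear_ladd bilinear_radd bilinear_lmul bilinear_rmul
      bilinear_lsub bilinear_rsub bilinear_lneg bilinear_rneg bilinear_lzero bilinear_rzero)

lemma subspace_ker_left:
  fixes B :: "'a::euclidean_space \<Rightarrow> 'a \<Rightarrow> real"
  assumes "bilinear B" shows "subspace {u. B u x = 0}"
  using bil_simps[OF assms] by (auto simp: subspace_def)

lemma subspace_orth:
  fixes B :: "'a::euclidean_space \<Rightarrow> 'a \<Rightarrow> real"
  assumes "bilinear B" shows "subspace (orth B L)"
  using bil_simps[OF assms] by (auto simp: subspace_def orth_def)

lemma span_ker_left:
  fixes B :: "'a::euclidean_space \<Rightarrow> 'a \<Rightarrow> real"
  assumes "bilinear B" "\<forall>u\<in>S. B u x = 0" "v \<in> span S"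
  shows "B v x = 0"
  using span_minimal[OF _ subspace_ker_left[OF assms(1), of x], of S] assms by auto

lemma diag_exists:
  fixes B :: "'a::euclidean_space \<Rightarrow> 'a \<Rightarrow> real"
  assumes bl: "bilinear B" and sym: "\<forall>x y. B x y = B y x"
  shows "subspace L \<Longrightarrow> \<exists>Bs. diag_basis B L Bs"
proof (induction "dim L" arbitrary: L rule: less_induct)
  case less
  note bs = bil_simps[OF bl]
  show ?case
  proof (cases "\<forall>x\<in>L. B x x = 0")
    case True
    have z: "B x y = 0" if "x \<in> L" "y \<in> L" for x y
    proof -
      have "B (x+y) (x+y) = 0" using True that less.prems subspace_add by blast
      then show ?thesis using True that bs sym by (simp add: algebra_simps)
    qed
    obtain Bs where Bs: "Bs \<subseteq> L" "independent Bs" "L \<subseteq> span Bs" "card Bs = dim L"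
      using basis_exists by blast
    have "span Bs = L" using Bs span_minimal[OF Bs(1) less.prems] by auto
    then show ?thesis using Bs z True independent_imp_finite[OF Bs(2)]
      unfolding diag_basis_def by blast
  next
    case False
    then obtain x where x: "x \<in> L" "B x x \<noteq> 0" by blast
    define c where "c = 1 / sqrt \<bar>B x x\<bar>"
    define e where "e = c *\<^sub>R x"
    have "B e e = c * c * B x x" using bs by (simp add: e_def)
    also have "c * c = 1 / \<bar>B x x\<bar>" using x by (simp add: c_def)
    finally have ee: "B e e = 1 \<or> B e e = -1" using x by (auto simp: abs_if)
    have eL: "e \<in> L" using x less.prems by (simp add: e_def subspace_scale)
    define L' where "L' = {y \<in> L. B e y = 0}"
    have subL': "subspace L'" unfolding L'_def
      using less.prems bs by (auto simp: subspace_def)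
    have eL': "e \<notin> L'" using ee by (auto simp: L'_def)
    have "L' \<subset> L" using eL eL' L'_def by auto
    hence "dim L' < dim L" using dim_psubset[of L' L] span_eq_iff subL' less.prems by metis
    then obtain Bs' where Bs': "diag_basis B L' Bs'" using less subL' by blast
    have spB: "span Bs' = L'" and fin: "finite Bs'" and ind: "independent Bs'"
      using Bs' by (auto simp: diag_basis_def)
    have "independent (insert e Bs')"
      using ind eL' spB span_base[of e Bs'] by (auto simp: independent_insert)
    moreover have "span (insert e Bs') = L"
    proof
      show "span (insert e Bs') \<subseteq> L"
        using span_minimal[of "insert e Bs'" L] eL spB span_superset[of Bs'] less.prems
        by (auto simp: L'_def)
      show "L \<subseteq> span (insert e Bs')"
      proof
        fix y assume y: "y \<in> L"
        define k where "k = B e y / B e e"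
        have "y - k *\<^sub>R e \<in> L'" using y eL ee less.prems bs
          by (auto simp: L'_def k_def subspace_diff subspace_scale)
        then show "y \<in> span (insert e Bs')" using span_breakdown_eq spB by blast
      qed
    qed
    moreover have "\<forall>b\<in>insert e Bs'. \<forall>c\<in>insert e Bs'. b \<noteq> c \<longrightarrow> B b c = 0"
    proof (intro ballI impI)
      fix b c assume b: "b \<in> insert e Bs'" and c: "c \<in> insert e Bs'" and bc: "b \<noteq> c"
      have "\<forall>x\<in>Bs'. B e x = 0" using spB span_superset[of Bs'] by (auto simp: L'_def)
      then show "B b c = 0" using b c bc Bs' sym unfolding diag_basis_def by auto
    qed
    moreover have "\<forall>b\<in>insert e Bs'. B b b = 1 \<or> B b b = -1 \<or> B b b = 0"
      using Bs' ee unfolding diag_basis_def by blast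
    ultimately show ?thesis using fin unfolding diag_basis_def by blast
  qed
qed


lemma span_finite_obtain:
  assumes "finite S" "x \<in> span S"
  obtains c where "x = (\<Sum>b\<in>S. c b *\<^sub>R b)"
  using assms span_finite[OF assms(1)] by auto

lemma pos_span:
  fixes B :: "'a::euclidean_space \<Rightarrow> 'a \<Rightarrow> real"
  assumes bl: "bilinear B" and D: "diag_basis B L Bs"
  defines "Pos \<equiv> {b\<in>Bs. B b b = 1}"
  shows "\<forall>x\<in>span Pos. x \<noteq> 0 \<longrightarrow> B x x > 0" "dim (span Pos) = card Pos"
    "subspace (span Pos)" "span Pos \<subseteq> L"
proof -
  have fin: "finite Pos" and ind: "independent Pos" and orth: "\<forall>b\<in>Pos. \<forall>c\<in>Pos. b \<noteq> c \<longrightarrow> B b c = 0"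
    using D independent_mono[of Bs Pos] by (auto simp: diag_basis_def Pos_def)
  show "\<forall>x\<in>span Pos. x \<noteq> 0 \<longrightarrow> B x x > 0"
  proof (intro ballI impI)
    fix x assume x: "x \<in> span Pos" "x \<noteq> 0"
    then obtain c where c: "x = (\<Sum>b\<in>Pos. c b *\<^sub>R b)" using span_finite_obtain fin by blast
    have "B x x = (\<Sum>b\<in>Pos. c b * c b * B b b)" using bil_sum_orth[OF bl fin orth] c by simp
    also have "\<dots> = (\<Sum>b\<in>Pos. (c b)^2)" by (auto simp: Pos_def power2_eq_square intro!: sum.cong)
    finally have xx: "B x x = (\<Sum>b\<in>Pos. (c b)^2)" .
    have "B x x \<noteq> 0"
    proof
      assume "B x x = 0"
      hence "\<forall>b\<in>Pos. (c b)^2 = 0" using xx sum_nonneg_eq_0_iff[OF fin, of "\<lambda>b. (c b)^2"] by simp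
      hence "x = 0" using c by simp
      thus False using x by simp
    qed
    moreover have "B x x \<ge> 0" using xx by (simp add: sum_nonneg)
    ultimately show "B x x > 0" by simp
  qed
  show "dim (span Pos) = card Pos" using dim_span dim_eq_card_independent[OF ind] by simp
  show "subspace (span Pos)" by simp
  show "span Pos \<subseteq> L" using D span_mono[of Pos Bs] by (auto simp: diag_basis_def Pos_def)
qed

lemma syl_bound:
  fixes B :: "'a::euclidean_space \<Rightarrow> 'a \<Rightarrow> real"
  assumes bl: "bilinear B" and D: "diag_basis B L Bs"
    and P: "subspace P" "P \<subseteq> L" "\<forall>x\<in>P. x \<noteq> 0 \<longrightarrow> B x x > 0"
  shows "dim P \<le> card {b\<in>Bs. B b b = 1}"
proof -
  define N where "N = {b\<in>Bs. B b b \<noteq> 1}"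
  define Pos where "Pos = {b\<in>Bs. B b b = 1}"
  have finB: "finite Bs" and indB: "independent Bs" and spB: "span Bs = L"
    using D by (auto simp: diag_basis_def)
  have fin: "finite N" and ind: "independent N" and orth: "\<forall>b\<in>N. \<forall>c\<in>N. b \<noteq> c \<longrightarrow> B b c = 0"
    and vals: "\<forall>b\<in>N. B b b \<le> 0"
    using D independent_mono[of Bs N] by (auto simp: diag_basis_def N_def)
  have int: "P \<inter> span N = {0}"
  proof (rule ccontr)
    assume "P \<inter> span N \<noteq> {0}"
    then obtain x where x: "x \<in> P" "x \<in> span N" "x \<noteq> 0"
      using P(1) subspace_0 by blast
    then obtain c where c: "x = (\<Sum>b\<in>N. c b *\<^sub>R b)" using span_finite_obtain fin by blast
    have "B x x = (\<Sum>b\<in>N. c b * c b * B b b)" using bil_sum_orth[OF bl fin orth] c by simp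
    also have "\<dots> \<le> 0" using vals by (intro sum_nonpos) (simp add: mult_nonneg_nonpos)
    finally show False using P(3) x by force
  qed
  have "dim {x + y |x y. x \<in> P \<and> y \<in> span N} + dim (P \<inter> span N) = dim P + dim (span N)"
    using dim_sums_Int[OF P(1), of "span N"] by simp
  moreover have "dim (P \<inter> span N) = 0" using int by simp
  moreover have "dim {x + y |x y. x \<in> P \<and> y \<in> span N} \<le> dim L"
  proof (rule dim_subset)
    show "{x + y |x y. x \<in> P \<and> y \<in> span N} \<subseteq> L"
    proof
      fix v assume "v \<in> {x + y |x y. x \<in> P \<and> y \<in> span N}"
      then obtain x y where v: "v = x + y" "x \<in> P" "y \<in> span N" by blast
      have "span N \<subseteq> L" using span_mono[of N Bs] spB by (auto simp: N_def)
      hence "y \<in> L" using v by blast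
      moreover have "x \<in> L" using v P(2) by blast
      ultimately show "v \<in> L" using v spB subspace_add[of L] subspace_span by metis
    qed
  qed
  moreover have "dim L = card Bs" using spB dim_span dim_eq_card_independent[OF indB] by metis
  moreover have "dim (span N) = card N" using dim_span dim_eq_card_independent[OF ind] by simp
  moreover have "card Bs = card Pos + card N"
  proof -
    have "Bs = Pos \<union> N" "Pos \<inter> N = {}" by (auto simp: Pos_def N_def)
    thus ?thesis using finB card_Un_disjoint[of Pos N] by (metis finite_Un)
  qed
  ultimately show ?thesis by (simp add: Pos_def)
qed

lemma q_plus_eq:
  fixes B :: "'a::euclidean_space \<Rightarrow> 'a \<Rightarrow> real"
  assumes bl: "bilinear B" and D: "diag_basis B L Bs"
  shows "q_plus B L = card {b\<in>Bs. B b b = 1}"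
proof -
  define S where "S = (SOME Bs. diag_basis B L Bs)"
  have DS: "diag_basis B L S" unfolding S_def using D by (rule someI)
  have "card {b\<in>S. B b b = 1} \<le> card {b\<in>Bs. B b b = 1}"
    using syl_bound[OF bl D, of "span {b\<in>S. B b b = 1}"] pos_span[OF bl DS] by simp
  moreover have "card {b\<in>Bs. B b b = 1} \<le> card {b\<in>S. B b b = 1}"
    using syl_bound[OF bl DS, of "span {b\<in>Bs. B b b = 1}"] pos_span[OF bl D] by simp
  ultimately show ?thesis unfolding q_plus_def S_def[symmetric] by simp
qed

lemma diag_neg: "diag_basis (\<lambda>x y. - B x y) L Bs = diag_basis B L Bs"
  unfolding diag_basis_def by (intro conj_cong refl) (auto simp: neg_equal_iff_equal)

lemma q_minus_eq:
  fixes B :: "'a::euclidean_space \<Rightarrow> 'a \<Rightarrow> real"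
  assumes bl: "bilinear B" and D: "diag_basis B L Bs"
  shows "q_minus B L = card {b\<in>Bs. B b b = -1}"
proof -
  have bl': "bilinear (\<lambda>x y. - B x y)"
  proof -
    have "linear (B x)" "linear (\<lambda>y. B y x)" for x using bl unfolding bilinear_def by auto
    then show ?thesis unfolding bilinear_def by (simp add: linear_compose_neg)
  qed
  have "q_minus B L = q_plus (\<lambda>x y. - B x y) L"
    unfolding q_minus_def q_plus_def diag_neg by (intro arg_cong[where f=card] Collect_cong) auto
  also have "\<dots> = card {b\<in>Bs. - B b b = 1}"
    using q_plus_eq[OF bl', of L Bs] D diag_neg[of B L Bs] by simp
  also have "\<dots> = card {b\<in>Bs. B b b = -1}" by (intro arg_cong[where f=card] Collect_cong) auto
  finally show ?thesis .
qed

lemma q_plus_le: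
  fixes B :: "'a::euclidean_space \<Rightarrow> 'a \<Rightarrow> real"
  assumes bl: "bilinear B" and sym: "\<forall>x y. B x y = B y x" and L: "subspace L"
    and P: "subspace P" "P \<subseteq> L" "\<forall>x\<in>P. x \<noteq> 0 \<longrightarrow> B x x > 0"
  shows "dim P \<le> q_plus B L"
proof -
  obtain Bs where D: "diag_basis B L Bs" using diag_exists[OF bl sym L] by blast
  show ?thesis using syl_bound[OF bl D P] q_plus_eq[OF bl D] by simp
qed

lemma q_plus_ge1:
  fixes B :: "'a::euclidean_space \<Rightarrow> 'a \<Rightarrow> real"
  assumes bl: "bilinear B" and sym: "\<forall>x y. B x y = B y x" and L: "subspace L"
  shows "q_plus B L \<ge> 1 \<longleftrightarrow> (\<exists>x\<in>L. B x x > 0)"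
proof
  obtain Bs where D: "diag_basis B L Bs" using diag_exists[OF bl sym L] by blast
  assume "q_plus B L \<ge> 1"
  hence "{b\<in>Bs. B b b = 1} \<noteq> {}" using q_plus_eq[OF bl D] by (metis card.empty not_one_le_zero)
  then obtain b where "b \<in> Bs" "B b b = 1" by auto
  moreover have "Bs \<subseteq> L" using D span_superset[of Bs] by (auto simp: diag_basis_def)
  ultimately show "\<exists>x\<in>L. B x x > 0" by force
next
  assume "\<exists>x\<in>L. B x x > 0"
  then obtain x where x: "x \<in> L" "B x x > 0" by blast
  have sub: "subspace (span {x})" by simp
  have "\<forall>y\<in>span {x}. y \<noteq> 0 \<longrightarrow> B y y > 0"
  proof (intro ballI impI)
    fix y assume "y \<in> span {x}" "y \<noteq> 0"
    then obtain t where "y = t *\<^sub>R x" "t \<noteq> 0" by (auto simp: span_singleton)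
    hence "B y y = (t*t) * B x x" using bil_simps[OF bl] by simp
    moreover have "t * t > 0" using \<open>t \<noteq> 0\<close> by (auto simp: zero_less_mult_iff linorder_neq_iff)
    ultimately show "B y y > 0" using x by simp
  qed
  moreover have "span {x} \<subseteq> L" using x L span_minimal by blast
  moreover have "dim (span {x}) = 1" using x bil_simps[OF bl] by (auto simp: dim_span dim_singleton) 
  ultimately show "q_plus B L \<ge> 1" using q_plus_le[OF bl sym L sub] by fastforce
qed


lemma card_filter_Un:
  assumes "finite A" "finite C" "A \<inter> C = {}"
  shows "card {b\<in>A \<union> C. P b} = card {b\<in>A. P b} + card {b\<in>C. P b}"
proof -
  have "{b\<in>A \<union> C. P b} = {b\<in>A. P b} \<union> {b\<in>C. P b}" by auto
  thus ?thesis using assms card_Un_disjoint[of "{b\<in>A. P b}" "{b\<in>C. P b}"] by auto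
qed

lemma diag_union:
  fixes B :: "'a::euclidean_space \<Rightarrow> 'a \<Rightarrow> real"
  assumes DA: "diag_basis B L1 A" and DC: "diag_basis B L2 C" and int: "L1 \<inter> L2 = {0}"
    and orth: "\<forall>a\<in>A. \<forall>c\<in>C. B a c = 0 \<and> B c a = 0"
  shows "diag_basis B {x + y |x y. x \<in> L1 \<and> y \<in> L2} (A \<union> C)" "A \<inter> C = {}"
proof -
  have fA: "finite A" "independent A" "span A = L1" and fC: "finite C" "independent C" "span C = L2"
    using DA DC by (auto simp: diag_basis_def)
  show disj: "A \<inter> C = {}"
  proof (rule ccontr)
    assume "A \<inter> C \<noteq> {}"
    then obtain x where "x \<in> A" "x \<in> C" by auto
    hence "x \<in> L1 \<inter> L2" using fA fC span_base by blast
    hence "x = 0" using int by auto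
    thus False using \<open>x \<in> A\<close> fA dependent_zero by blast
  qed
  have sp: "span (A \<union> C) = {x + y |x y. x \<in> L1 \<and> y \<in> L2}" by (simp only: span_Un fA(3) fC(3))
  have "card (A \<union> C) \<le> card A + card C" by (rule card_Un_le)
  also have "\<dots> = dim L1 + dim L2"
    using fA fC dim_span dim_eq_card_independent by metis
  also have "\<dots> = dim {x + y |x y. x \<in> L1 \<and> y \<in> L2} + dim (L1 \<inter> L2)"
    using dim_sums_Int[of L1 L2] fA fC by (metis subspace_span)
  also have "dim (L1 \<inter> L2) = 0" using int dim_eq_0 by simp
  finally have "card (A \<union> C) \<le> dim (span (A \<union> C))" using sp by simp
  moreover have "A \<union> C \<subseteq> span (A \<union> C)" by (rule span_superset)
  ultimately have ind: "independent (A \<union> C)"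
    using card_le_dim_spanning[of "A \<union> C" "span (A \<union> C)"] fA(1) fC(1) by simp
  show "diag_basis B {x + y |x y. x \<in> L1 \<and> y \<in> L2} (A \<union> C)"
    unfolding diag_basis_def using ind sp fA fC DA DC orth
    unfolding diag_basis_def by blast
qed

locale PE =
  fixes B :: "'a::euclidean_space \<Rightarrow> 'a \<Rightarrow> real" and H :: "'a set" and Hb :: "'a set"
  assumes bl: "bilinear B" and sym: "\<forall>x y. B x y = B y x"
    and nd: "\<forall>x. (\<forall>y. B x y = 0) \<longrightarrow> x = 0"
    and Hsub: "subspace H" and Hpos: "\<forall>x\<in>H. x \<noteq> 0 \<longrightarrow> B x x > 0"
    and Hb: "diag_basis B H Hb"
begin

lemmas bs = bil_simps[OF bl]

definition "Q v = (\<Sum>h\<in>Hb. B v h *\<^sub>R h)"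
definition "W = orth B H"
definition "P v = v - Q v"

lemma Hb_fin: "finite Hb" and Hb_ind: "independent Hb" and Hb_span: "span Hb = H"
  and Hb_orth: "\<forall>b\<in>Hb. \<forall>c\<in>Hb. b \<noteq> c \<longrightarrow> B b c = 0"
  using Hb by (auto simp: diag_basis_def)

lemma Hb_sub: "Hb \<subseteq> H" using Hb_span span_superset by blast

lemma Hb_one: "h \<in> Hb \<Longrightarrow> B h h = 1"
proof -
  assume h: "h \<in> Hb"
  hence "h \<noteq> 0" using Hb_ind dependent_zero by blast
  hence "B h h > 0" using Hpos Hb_sub h by blast
  thus ?thesis using Hb h by (auto simp: diag_basis_def)
qed

lemma Q_H: "Q v \<in> H"
  unfolding Q_def using Hb_sub by (intro subspace_sum[OF Hsub] subspace_scale[OF Hsub]) auto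

lemma Q_inner: "h \<in> Hb \<Longrightarrow> B h (Q v) = B v h"
proof -
  assume h: "h \<in> Hb"
  have "linear (B h)" using bl by (simp add: bilinear_def)
  hence "B h (Q v) = (\<Sum>a\<in>Hb. B v a * B h a)"
    unfolding Q_def by (simp add: linear_sum linear_scale)
  also have "\<dots> = B v h * B h h + (\<Sum>a\<in>Hb-{h}. B v a * B h a)"
    using sum.remove[OF Hb_fin h] by simp
  also have "(\<Sum>a\<in>Hb-{h}. B v a * B h a) = 0"
    using Hb_orth h by (intro sum.neutral) auto
  finally show ?thesis using Hb_one h by simp
qed

lemma W_sub: "subspace W" unfolding W_def by (rule subspace_orth[OF bl])

lemma W_iff: "w \<in> W \<longleftrightarrow> (\<forall>h\<in>Hb. B h w = 0)"
proof
  assume "w \<in> W" thus "\<forall>h\<in>Hb. B h w = 0" using Hb_sub by (auto simp: W_def orth_def)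
next
  assume "\<forall>h\<in>Hb. B h w = 0"
  thus "w \<in> W" using span_ker_left[OF bl, of Hb w] Hb_span by (auto simp: W_def orth_def)
qed

lemma P_W: "P v \<in> W"
  unfolding W_iff P_def using Q_inner bs sym by simp

lemma Q_W: "w \<in> W \<Longrightarrow> Q w = 0"
proof -
  assume "w \<in> W"
  hence "\<forall>h\<in>Hb. B w h = 0" using W_iff sym by metis
  thus "Q w = 0" unfolding Q_def by simp
qed

lemma HW: "H \<inter> W = {0}"
proof -
  have "x = 0" if "x \<in> H" "x \<in> W" for x
  proof -
    have "B x x = 0" using that by (auto simp: W_def orth_def)
    thus ?thesis using Hpos that by force
  qed
  thus ?thesis using Hsub W_sub subspace_0 by blast
qed

lemma decomp: "v = Q v + P v" by (simp add: P_def)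

lemma B_H_W: "h \<in> H \<Longrightarrow> w \<in> W \<Longrightarrow> B h w = 0 \<and> B w h = 0"
  using sym by (auto simp: W_def orth_def)

lemma P_H: "h \<in> H \<Longrightarrow> P h = 0"
proof -
  assume h: "h \<in> H"
  have "P h \<in> H" using h Q_H Hsub by (simp add: P_def subspace_diff)
  thus ?thesis using P_W HW by blast
qed

lemma P_add: "P (x + y) = P x + P y" and P_neg: "P (- x) = - P x"
proof -
  have "Q (x + y) = Q x + Q y" unfolding Q_def by (simp add: bs scaleR_add_left sum.distrib)
  thus "P (x + y) = P x + P y" by (simp add: P_def)
  have "Q (- x) = - Q x" unfolding Q_def by (simp add: bs sum_negf)
  thus "P (- x) = - P x" by (simp add: P_def)
qed

lemma B_P: "w \<in> W \<Longrightarrow> B z w = B (P z) w"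
proof -
  assume "w \<in> W"
  have "B z w = B (Q z + P z) w" by (simp add: P_def)
  also have "\<dots> = B (Q z) w + B (P z) w" by (rule bs(1))
  finally have "B z w = B (Q z) w + B (P z) w" .
  thus ?thesis using B_H_W[OF Q_H \<open>w \<in> W\<close>] by simp
qed

lemma W_nd: "x \<in> W \<Longrightarrow> \<forall>y\<in>W. B x y = 0 \<Longrightarrow> x = 0"
proof -
  assume x: "x \<in> W" "\<forall>y\<in>W. B x y = 0"
  have "B x y = 0" for y
  proof -
    have "B x y = B x (Q y + P y)" by (simp add: P_def)
    also have "\<dots> = B x (Q y) + B x (P y)" by (rule bs(2))
    finally have "B x y = B x (Q y) + B x (P y)" .
    thus ?thesis using x P_W B_H_W[OF Q_H x(1)] by simp
  qed
  thus "x = 0" using nd by blast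
qed

lemma sum_HW: "{x + y |x y. x \<in> H \<and> y \<in> W} = UNIV"
  using decomp Q_H P_W by blast

end

lemma sum_inner:
  fixes B :: "'a::euclidean_space \<Rightarrow> 'a \<Rightarrow> real"
  assumes bl: "bilinear B" and fin: "finite S" and orth: "\<forall>b\<in>S. \<forall>c\<in>S. b \<noteq> c \<longrightarrow> B b c = 0"
    and b: "b \<in> S"
  shows "B (\<Sum>a\<in>S. c a *\<^sub>R a) b = c b * B b b"
proof -
  have lin: "linear (\<lambda>x. B x b)" using bl by (simp add: bilinear_def)
  have "B (\<Sum>a\<in>S. c a *\<^sub>R a) b = (\<Sum>a\<in>S. c a * B a b)"
    by (simp add: linear_sum[OF lin] linear_scale[OF lin])
  also have "\<dots> = c b * B b b + (\<Sum>a\<in>S-{b}. c a * B a b)"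
    using sum.remove[OF fin b] by simp
  also have "(\<Sum>a\<in>S-{b}. c a * B a b) = 0"
    using orth b by (intro sum.neutral) auto
  finally show ?thesis by simp
qed

lemma real_cs:
  fixes a b c :: real
  assumes "\<forall>t. a + 2*t*b + t^2*c \<le> 0" "c \<le> 0"
  shows "b^2 \<le> a * c"
proof (cases "c = 0")
  case True
  have "b = 0"
  proof (rule ccontr)
    assume "b \<noteq> 0"
    have "a + 2*((1 - a)/(2*b))*b + ((1 - a)/(2*b))^2*c \<le> 0" using assms(1) by blast
    thus False using True \<open>b \<noteq> 0\<close> by (simp add: field_simps)
  qed
  thus ?thesis using True by simp
next
  case False
  hence c: "c < 0" using assms(2) by simp
  have "a + 2*(-b/c)*b + (-b/c)^2*c \<le> 0" using assms(1) by blast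
  hence "a - b^2/c \<le> 0" using c by (simp add: field_simps power2_eq_square)
  hence "(a - b^2/c) * c \<ge> 0" using c by (simp add: mult_nonpos_nonpos)
  thus ?thesis using c by (simp add: field_simps)
qed

context PE begin

definition "Wb = (SOME Bs. diag_basis B W Bs)"

lemma Wb: "diag_basis B W Wb"
  unfolding Wb_def using diag_exists[OF bl sym W_sub] by (rule someI_ex)

lemma Wb_fin: "finite Wb" and Wb_ind: "independent Wb" and Wb_span: "span Wb = W"
  and Wb_orth: "\<forall>b\<in>Wb. \<forall>c\<in>Wb. b \<noteq> c \<longrightarrow> B b c = 0"
  using Wb by (auto simp: diag_basis_def)

lemma Wb_sub: "Wb \<subseteq> W" using Wb_span span_superset by blast

lemma Wb_nz: "b \<in> Wb \<Longrightarrow> B b b = 1 \<or> B b b = -1"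
proof -
  assume b: "b \<in> Wb"
  have "B b b \<noteq> 0"
  proof
    assume bb: "B b b = 0"
    have "\<forall>c\<in>Wb. B c b = 0" using Wb_orth b bb sym by metis
    hence "\<forall>y\<in>W. B y b = 0" using span_ker_left[OF bl, of Wb b] Wb_span by auto
    hence "b = 0" using W_nd[of b] b Wb_sub sym by auto
    thus False using b Wb_ind dependent_zero by blast
  qed
  thus ?thesis using Wb b by (auto simp: diag_basis_def)
qed

lemma univ_diag: "diag_basis B UNIV (Hb \<union> Wb)" and HbWb: "Hb \<inter> Wb = {}"
proof -
  have o: "\<forall>a\<in>Hb. \<forall>c\<in>Wb. B a c = 0 \<and> B c a = 0" using B_H_W Hb_sub Wb_sub by blast
  show "diag_basis B UNIV (Hb \<union> Wb)" using diag_union(1)[OF Hb Wb HW o] sum_HW by simp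
  show "Hb \<inter> Wb = {}" using diag_union(2)[OF Hb Wb HW o] .
qed

lemma dimH: "dim H = card Hb"
  using Hb_span Hb_ind dim_span dim_eq_card_independent by metis

lemma qplus_univ: "q_plus B UNIV = dim H + q_plus B W"
proof -
  have "q_plus B UNIV = card {b\<in>Hb \<union> Wb. B b b = 1}" using q_plus_eq[OF bl univ_diag] .
  also have "\<dots> = card {b\<in>Hb. B b b = 1} + card {b\<in>Wb. B b b = 1}"
    using card_filter_Un[OF Hb_fin Wb_fin HbWb] .
  also have "{b\<in>Hb. B b b = 1} = Hb" using Hb_one by auto
  finally show ?thesis using dimH q_plus_eq[OF bl Wb] by simp
qed

lemma qminus_univ: "q_minus B UNIV = q_minus B W"
proof -
  have "q_minus B UNIV = card {b\<in>Hb \<union> Wb. B b b = -1}" using q_minus_eq[OF bl univ_diag] .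
  also have "\<dots> = card {b\<in>Hb. B b b = -1} + card {b\<in>Wb. B b b = -1}"
    using card_filter_Un[OF Hb_fin Wb_fin HbWb] .
  also have "{b\<in>Hb. B b b = -1} = {}" using Hb_one by force
  finally show ?thesis using q_minus_eq[OF bl Wb] by simp
qed

definition "frame e \<longleftrightarrow> e \<in> W \<and> B e e = 1 \<and> (\<forall>w\<in>W. B w e = 0 \<longrightarrow> w \<noteq> 0 \<longrightarrow> B w w < 0)"

lemma frame_exists:
  assumes "q_plus B W = 1" shows "\<exists>e. frame e"
proof -
  have "card {b\<in>Wb. B b b = 1} = 1" using assms q_plus_eq[OF bl Wb] by simp
  then obtain e where e: "{b\<in>Wb. B b b = 1} = {e}" using card_1_singletonE by blast
  have eW: "e \<in> Wb" "B e e = 1" using e by auto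
  have oth: "b \<in> Wb \<Longrightarrow> b \<noteq> e \<Longrightarrow> B b b = -1" for b using e Wb_nz by blast
  have "frame e" unfolding frame_def
  proof (intro conjI ballI impI)
    show "e \<in> W" using eW Wb_sub by auto
    show "B e e = 1" using eW by simp
    fix w assume w: "w \<in> W" "B w e = 0" "w \<noteq> 0"
    obtain c where c: "w = (\<Sum>b\<in>Wb. c b *\<^sub>R b)" using span_finite_obtain[OF Wb_fin] w Wb_span by blast
    have "B w e = c e * B e e" using sum_inner[OF bl Wb_fin Wb_orth eW(1)] c by simp
    hence ce: "c e = 0" using w eW by simp
    have "B w w = (\<Sum>b\<in>Wb. c b * c b * B b b)" using bil_sum_orth[OF bl Wb_fin Wb_orth] c by simp
    also have "\<dots> = (\<Sum>b\<in>Wb. uminus ((c b)^2))"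
    proof (intro sum.cong refl)
      fix b assume "b \<in> Wb"
      thus "c b * c b * B b b = uminus ((c b)^2)"
        by (cases "b = e") (auto simp: ce oth power2_eq_square)
    qed
    finally have ww: "B w w = - (\<Sum>b\<in>Wb. (c b)^2)" by (simp add: sum_negf)
    have "(\<Sum>b\<in>Wb. (c b)^2) \<noteq> 0"
    proof
      assume "(\<Sum>b\<in>Wb. (c b)^2) = 0"
      hence "\<forall>b\<in>Wb. (c b)^2 = 0" using sum_nonneg_eq_0_iff[OF Wb_fin, of "\<lambda>b. (c b)^2"] by simp
      hence "w = 0" using c by simp
      thus False using w by simp
    qed
    moreover have "(\<Sum>b\<in>Wb. (c b)^2) \<ge> 0" by (simp add: sum_nonneg)
    ultimately show "B w w < 0" using ww by simp
  qed
  thus ?thesis by blast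
qed

lemma frame_neg: "frame e \<Longrightarrow> frame (- e)"
  unfolding frame_def using bs W_sub by (auto simp: subspace_neg)

definition "K = causal_cone B W"
definition "Kp e = {w\<in>K. B w e > 0}"

lemma expand:
  assumes "frame e" "B x e = 0" "B y e = 0"
  shows "B (a *\<^sub>R e + x) (b *\<^sub>R e + y) = a * b + B x y"
  using assms sym bs by (simp add: frame_def algebra_simps)

lemma split:
  assumes "frame e" "w \<in> W"
  shows "w = (B w e) *\<^sub>R e + (w - (B w e) *\<^sub>R e)" "B (w - (B w e) *\<^sub>R e) e = 0"
    "w - (B w e) *\<^sub>R e \<in> W"
  using assms bs W_sub by (auto simp: frame_def subspace_diff subspace_scale)

lemma K_ne: assumes "frame e" "w \<in> K" shows "B w e \<noteq> 0"
proof
  assume a: "B w e = 0"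
  have "w \<in> W" "w \<noteq> 0" "B w w \<ge> 0" using assms(2) by (auto simp: K_def causal_cone_def)
  thus False using a assms(1) by (auto simp: frame_def)
qed

end

context PE begin

lemma frame_basic: assumes "frame e" shows "e \<in> W" "B e e = 1" "e \<noteq> 0" "e \<in> Kp e"
proof -
  show eW: "e \<in> W" and ee: "B e e = 1" using assms by (auto simp: frame_def)
  show ne: "e \<noteq> 0" using ee bs by auto
  show "e \<in> Kp e" using eW ee ne by (simp add: Kp_def K_def causal_cone_def)
qed

lemma Kp_sub: "Kp e \<subseteq> K" by (auto simp: Kp_def)

lemma Kp_connected:
  assumes fr: "frame e" shows "connected (Kp e)"
proof -
  have "starlike (Kp e)" unfolding starlike_def
  proof (intro bexI[of _ e] ballI)
    show "e \<in> Kp e" using frame_basic[OF fr] by simp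
    fix w assume w: "w \<in> Kp e"
    have wW: "w \<in> W" and ww: "B w w \<ge> 0" and a: "B w e > 0"
      using w by (auto simp: Kp_def K_def causal_cone_def)
    define a where "a = B w e"
    define w0 where "w0 = w - a *\<^sub>R e"
    have w0e: "B w0 e = 0" and w0W: "w0 \<in> W" using split[OF fr wW] by (auto simp: w0_def a_def)
    have "B w w = B (a *\<^sub>R e + w0) (a *\<^sub>R e + w0)" by (simp add: w0_def)
    also have "\<dots> = a * a + B w0 w0" using expand[OF fr w0e w0e] .
    finally have www: "B w w = a * a + B w0 w0" .
    show "closed_segment e w \<subseteq> Kp e"
    proof
      fix x assume "x \<in> closed_segment e w"
      then obtain u where u: "0 \<le> u" "u \<le> 1" "x = (1 - u) *\<^sub>R e + u *\<^sub>R w"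
        by (auto simp: closed_segment_def)
      define s where "s = (1 - u) + u * a"
      have x: "x = s *\<^sub>R e + (u *\<^sub>R w0)"
        by (simp add: u(3) s_def w0_def algebra_simps)
      have ue: "B (u *\<^sub>R w0) e = 0" using w0e bs by simp
      have "B x e = s * B e e + B (u *\<^sub>R w0) e" using x bs by simp
      hence xe: "B x e = s" using ue frame_basic[OF fr] by simp
      have s0: "s > 0"
      proof (cases "u = 0")
        case True thus ?thesis by (simp add: s_def)
      next
        case False
        hence "u * a > 0" using u a by (simp add: a_def)
        thus ?thesis using u by (simp add: s_def)
      qed
      have "B x x = s * s + B (u *\<^sub>R w0) (u *\<^sub>R w0)" using x expand[OF fr ue ue] by simp
      also have "B (u *\<^sub>R w0) (u *\<^sub>R w0) = u * u * B w0 w0" using bs by simp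
      finally have xx: "B x x = s * s + u * u * B w0 w0" .
      have "s \<ge> u * a" using u by (simp add: s_def)
      moreover have "u * a \<ge> 0" using u a by (simp add: a_def)
      ultimately have "s * s \<ge> (u * a) * (u * a)" by (simp add: mult_mono')
      moreover have "u * u * (a * a + B w0 w0) \<ge> 0" using ww www by simp
      ultimately have "B x x \<ge> 0" using xx by (simp add: algebra_simps)
      moreover have "x \<in> W" using x W_sub frame_basic[OF fr] w0W
        by (simp add: subspace_add subspace_scale)
      moreover have "x \<noteq> 0" using xe s0 bs by auto
      ultimately show "x \<in> Kp e" using xe s0 by (simp add: Kp_def K_def causal_cone_def)
    qed
  qed
  thus ?thesis by (rule starlike_imp_connected)
qed

lemma comp_Kp:
  assumes fr: "frame e" and x: "x \<in> Kp e"
  shows "connected_component_set K x = Kp e"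
proof
  show "Kp e \<subseteq> connected_component_set K x"
    using connected_component_maximal[OF x Kp_connected[OF fr] Kp_sub] .
  show "connected_component_set K x \<subseteq> Kp e"
  proof
    fix y assume y: "y \<in> connected_component_set K x"
    define D where "D = connected_component_set K x"
    have DK: "D \<subseteq> K" unfolding D_def by (rule connected_component_subset)
    have cD: "connected D" unfolding D_def by (rule connected_connected_component)
    have lin: "linear (\<lambda>w. B w e)" using bl by (simp add: bilinear_def)
    hence "continuous_on D (\<lambda>w. B w e)" using linear_continuous_on linear_conv_bounded_linear by blast
    hence cI: "connected ((\<lambda>w. B w e) ` D)" using connected_continuous_image cD by blast
    have xD: "x \<in> D" using x Kp_sub unfolding D_def by (auto intro: connected_component_refl)
    have yK: "y \<in> K" using y DK D_def by auto
    have "B y e > 0"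
    proof (rule ccontr)
      assume "\<not> B y e > 0"
      hence "B y e \<le> 0" by simp
      moreover have "B x e \<ge> 0" using x by (simp add: Kp_def)
      ultimately have "0 \<in> (\<lambda>w. B w e) ` D"
        using connectedD_interval[OF cI, of "B y e" "B x e" 0] xD y D_def by auto
      then obtain d where "d \<in> D" "B d e = 0" by auto
      thus False using K_ne[OF fr] DK by auto
    qed
    thus "y \<in> Kp e" using yK by (simp add: Kp_def)
  qed
qed

lemma components_K:
  assumes fr: "frame e" shows "components K = {Kp e, Kp (- e)}"
proof -
  have fr': "frame (- e)" using frame_neg[OF fr] .
  have "x \<in> Kp e \<or> x \<in> Kp (- e)" if "x \<in> K" for x
    using K_ne[OF fr that] that bs by (auto simp: Kp_def)
  hence "connected_component_set K x \<in> {Kp e, Kp (- e)}" if "x \<in> K" for x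
    using comp_Kp[OF fr] comp_Kp[OF fr'] that by blast
  moreover have "Kp e \<in> connected_component_set K ` K"
    using comp_Kp[OF fr] frame_basic[OF fr] Kp_sub by (metis image_eqI subsetD)
  moreover have "Kp (- e) \<in> connected_component_set K ` K"
    using comp_Kp[OF fr'] frame_basic[OF fr'] Kp_sub by (metis image_eqI subsetD)
  ultimately show ?thesis unfolding components_def by blast
qed

lemma Kp_distinct: assumes fr: "frame e" shows "Kp e \<noteq> Kp (- e)"
proof -
  have "e \<in> Kp e" using frame_basic[OF fr] by simp
  moreover have "e \<notin> Kp (- e)" using frame_basic[OF fr] bs by (simp add: Kp_def)
  ultimately show ?thesis by blast
qed

lemma timelike_pos:
  assumes fr: "frame e" and wW: "w \<in> W" and ww: "B w w > 0" and we: "B w e > 0" and u: "u \<in> Kp e"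
  shows "B w u > 0"
proof -
  have uW: "u \<in> W" and uu: "B u u \<ge> 0" and ue: "B u e > 0"
    using u by (auto simp: Kp_def K_def causal_cone_def)
  define a where "a = B w e"
  define b where "b = B u e"
  define w0 where "w0 = w - a *\<^sub>R e"
  define u0 where "u0 = u - b *\<^sub>R e"
  have w0: "B w0 e = 0" "w0 \<in> W" using split[OF fr wW] by (auto simp: w0_def a_def)
  have u0: "B u0 e = 0" "u0 \<in> W" using split[OF fr uW] by (auto simp: u0_def b_def)
  have W0neg: "B x x \<le> 0" if "x \<in> W" "B x e = 0" for x
    using fr that bs by (cases "x = 0") (auto simp: frame_def intro: less_imp_le)
  have wd: "w = a *\<^sub>R e + w0" and ud: "u = b *\<^sub>R e + u0" by (simp_all add: w0_def u0_def)
  have eq1: "B w w = a * a + B w0 w0" using expand[OF fr w0(1) w0(1), of a a] wd by metis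
  have eq2: "B u u = b * b + B u0 u0" using expand[OF fr u0(1) u0(1), of b b] ud by metis
  have eq3: "B w u = a * b + B w0 u0" using expand[OF fr w0(1) u0(1), of a b] wd ud by metis
  have cs: "(B w0 u0)^2 \<le> B w0 w0 * B u0 u0"
  proof (rule real_cs)
    show "B u0 u0 \<le> 0" using W0neg u0 by blast
    show "\<forall>t. B w0 w0 + 2 * t * B w0 u0 + t^2 * B u0 u0 \<le> 0"
    proof
      fix t
      have "w0 + t *\<^sub>R u0 \<in> W" using w0 u0 W_sub by (simp add: subspace_add subspace_scale)
      moreover have "B (w0 + t *\<^sub>R u0) e = 0" using w0 u0 bs by simp
      ultimately have "B (w0 + t *\<^sub>R u0) (w0 + t *\<^sub>R u0) \<le> 0" using W0neg by blast
      moreover have "B (w0 + t *\<^sub>R u0) (w0 + t *\<^sub>R u0) = B w0 w0 + 2 * t * B w0 u0 + t^2 * B u0 u0"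
        using bs sym by (simp add: algebra_simps power2_eq_square)
      ultimately show "B w0 w0 + 2 * t * B w0 u0 + t^2 * B u0 u0 \<le> 0" by simp
    qed
  qed
  have p: "0 \<le> - B w0 w0" "- B w0 w0 < a * a" using W0neg w0 eq1 ww by auto
  have q: "0 \<le> - B u0 u0" "- B u0 u0 \<le> b * b" using W0neg u0 eq2 uu by auto
  have ab: "a > 0" "b > 0" using we ue by (auto simp: a_def b_def)
  have "B w0 w0 * B u0 u0 = (- B w0 w0) * (- B u0 u0)" by simp
  also have "\<dots> \<le> (- B w0 w0) * (b * b)" using p q by (intro mult_left_mono) auto
  also have "\<dots> < (a * a) * (b * b)" using p ab by (intro mult_strict_right_mono) auto
  finally have "(B w0 u0)^2 < (a * b)^2" using cs by (simp add: power2_eq_square algebra_simps)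
  hence "\<bar>B w0 u0\<bar> < a * b" using ab
    by (metis abs_of_pos power2_abs power_less_imp_less_base zero_le_mult_iff less_imp_le abs_ge_zero mult_pos_pos)
  thus ?thesis using eq3 by linarith
qed

lemma orth_exists:
  assumes fr: "frame e" and Y: "subspace Y" "Y \<subseteq> W" "\<forall>y\<in>Y. B y y \<le> 0"
  shows "\<exists>u\<in>Kp e. \<forall>y\<in>Y. B y u = 0"
proof -
  obtain Yb where D: "diag_basis B Y Yb" using diag_exists[OF bl sym Y(1)] by blast
  have fin: "finite Yb" and ind: "independent Yb" and sp: "span Yb = Y"
    and orth: "\<forall>b\<in>Yb. \<forall>c\<in>Yb. b \<noteq> c \<longrightarrow> B b c = 0"
    and vals: "\<forall>b\<in>Yb. B b b = 1 \<or> B b b = -1 \<or> B b b = 0"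
    using D by (auto simp: diag_basis_def)
  have YbY: "Yb \<subseteq> Y" using sp span_superset by blast
  have vals': "\<forall>b\<in>Yb. B b b = -1 \<or> B b b = 0" using vals Y(3) YbY by fastforce
  show ?thesis
  proof (cases "\<exists>n\<in>Yb. B n n = 0")
    case True
    then obtain n where n: "n \<in> Yb" "B n n = 0" by blast
    have nz: "n \<noteq> 0" using n ind dependent_zero by blast
    have nW: "n \<in> W" using n YbY Y(2) by blast
    have "\<forall>c\<in>Yb. B c n = 0" using orth n sym by metis
    hence perp: "\<forall>y\<in>Y. B y n = 0" using span_ker_left[OF bl, of Yb n] sp by auto
    have nK: "n \<in> K" using nz nW n by (simp add: K_def causal_cone_def)
    have ne: "B n e \<noteq> 0" using K_ne[OF fr nK] .
    show ?thesis
    proof (cases "B n e > 0")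
      case True
      thus ?thesis using nK perp by (auto simp: Kp_def)
    next
      case False
      hence "B (- n) e > 0" using ne bs by simp
      moreover have "- n \<in> K" using nK bs W_sub by (auto simp: K_def causal_cone_def subspace_neg)
      moreover have "\<forall>y\<in>Y. B y (- n) = 0" using perp bs by simp
      ultimately show ?thesis by (auto simp: Kp_def)
    qed
  next
    case False
    hence m1: "\<forall>b\<in>Yb. B b b = -1" using vals' by blast
    define s where "s = (\<Sum>b\<in>Yb. B e b *\<^sub>R b)"
    define u where "u = e + s"
    have ub: "B u b = 0" if b: "b \<in> Yb" for b
    proof -
      have "B u b = B e b + B (\<Sum>a\<in>Yb. B e a *\<^sub>R a) b" by (simp add: u_def s_def bs)
      also have "B (\<Sum>a\<in>Yb. B e a *\<^sub>R a) b = B e b * B b b" using sum_inner[OF bl fin orth b] .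
      finally show ?thesis using m1 b by simp
    qed
    have perp: "\<forall>y\<in>Y. B y u = 0"
      using span_ker_left[OF bl, of Yb u] sp ub sym by metis
    have lin: "linear (B e)" using bl by (simp add: bilinear_def)
    have "B e u = B e e + (\<Sum>b\<in>Yb. B e b * B e b)"
      by (simp add: u_def s_def bs linear_sum[OF lin] linear_scale[OF lin])
    hence eu: "B e u \<ge> 1" using frame_basic[OF fr] by (simp add: sum_nonneg)
    have lin2: "linear (B u)" using bl by (simp add: bilinear_def)
    have "B u u = B u e + B u s" by (metis u_def bs(2))
    also have "B u s = (\<Sum>b\<in>Yb. B e b * B u b)"
      unfolding s_def by (simp add: linear_sum[OF lin2] linear_scale[OF lin2])
    also have "(\<Sum>b\<in>Yb. B e b * B u b) = 0" using ub by simp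
    finally have uu: "B u u = B u e" by simp
    have ue: "B u e \<ge> 1" using eu sym by metis
    have uW: "u \<in> W" unfolding u_def s_def using frame_basic[OF fr] W_sub YbY Y(2)
      by (intro subspace_add[OF W_sub] subspace_sum[OF W_sub] subspace_scale[OF W_sub]) auto
    have "u \<noteq> 0" using ue bs by auto
    hence "u \<in> Kp e" using uW uu ue by (simp add: Kp_def K_def causal_cone_def)
    thus ?thesis using perp by blast
  qed
qed

end

context PE begin

lemma Hspan: "span H = H" using span_eq_iff[of H] Hsub by simp

lemma E_span: "set_plus H {t *\<^sub>R z | t. True} = span (insert z H)"
proof -
  have "x \<in> set_plus H {t *\<^sub>R z | t. True} \<longleftrightarrow> (\<exists>t. x - t *\<^sub>R z \<in> H)" for x
  proof
    assume "x \<in> set_plus H {t *\<^sub>R z | t. True}"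
    then obtain h t where "x = h + t *\<^sub>R z" "h \<in> H" by (auto simp: set_plus_def)
    thus "\<exists>t. x - t *\<^sub>R z \<in> H" by (intro exI[of _ t]) simp
  next
    assume "\<exists>t. x - t *\<^sub>R z \<in> H"
    then obtain t where "x - t *\<^sub>R z \<in> H" by blast
    thus "x \<in> set_plus H {t *\<^sub>R z | t. True}" unfolding set_plus_def
      by (intro CollectI exI[of _ "x - t *\<^sub>R z"] exI[of _ "t *\<^sub>R z"]) auto
  qed
  moreover have "x \<in> span (insert z H) \<longleftrightarrow> (\<exists>t. x - t *\<^sub>R z \<in> H)" for x
    using span_breakdown_eq[of x z H] Hspan by simp
  ultimately show ?thesis by blast
qed

lemma ext_iff:
  "extendable B (dim H + 1) Z H \<longleftrightarrow> (\<exists>z\<in>Z. B (P z) (P z) > 0)"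
proof
  assume "extendable B (dim H + 1) Z H"
  then obtain z where z: "z \<in> Z" "positive_plane B (dim H + 1) (span (insert z H))"
    unfolding extendable_def E_span by auto
  have "dim (span (insert z H)) = dim H + 1" using z by (simp add: positive_plane_def)
  hence zH: "z \<notin> H" using dim_insert[of z H] Hspan by (auto simp: dim_span split: if_splits)
  have "P z \<noteq> 0" using zH Q_H[of z] by (auto simp: P_def)
  moreover have "P z \<in> span (insert z H)"
    using span_breakdown_eq[of "P z" z H] Hspan Q_H
    by (auto simp: P_def intro!: exI[of _ 1] subspace_neg)
  ultimately show "\<exists>z\<in>Z. B (P z) (P z) > 0" using z by (auto simp: positive_plane_def)
next
  assume "\<exists>z\<in>Z. B (P z) (P z) > 0"
  then obtain z where z: "z \<in> Z" "B (P z) (P z) > 0" by blast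
  have zH: "z \<notin> H" using P_H z bs by force
  have "dim (span (insert z H)) = dim H + 1"
    using dim_insert[of z H] Hspan zH by (simp add: dim_span)
  moreover have "\<forall>x\<in>span (insert z H). x \<noteq> 0 \<longrightarrow> B x x > 0"
  proof (intro ballI impI)
    fix x assume x: "x \<in> span (insert z H)" "x \<noteq> 0"
    then obtain t where t: "x - t *\<^sub>R z \<in> H" using span_breakdown_eq[of x z H] Hspan by auto
    define h where "h = x - t *\<^sub>R z + t *\<^sub>R Q z"
    have hH: "h \<in> H" unfolding h_def using t Q_H Hsub by (simp add: subspace_add subspace_scale)
    have xd: "x = h + t *\<^sub>R P z" by (simp add: h_def P_def algebra_simps)
    have o: "B h (P z) = 0" "B (P z) h = 0" using B_H_W[OF hH P_W] by auto
    have xx: "B x x = B h h + t * t * B (P z) (P z)" unfolding xd using bs o by (simp add: algebra_simps)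
    have hh: "B h h \<ge> 0" using Hpos hH bs by (cases "h = 0") (auto intro: less_imp_le)
    show "B x x > 0"
    proof (cases "t = 0")
      case True
      hence "h = x" using xd by simp
      thus ?thesis using Hpos hH x xx True by auto
    next
      case False
      hence "t * t > 0" by (auto simp: zero_less_mult_iff linorder_neq_iff)
      hence "t * t * B (P z) (P z) > 0" using z by simp
      thus ?thesis using xx hh by simp
    qed
  qed
  ultimately have "positive_plane B (dim H + 1) (span (insert z H))" by (simp add: positive_plane_def)
  thus "extendable B (dim H + 1) Z H" using z unfolding extendable_def E_span by auto
qed

lemma S_eq:
  assumes Z: "subspace Z"
  shows "set_plus H Z = {x + y |x y. x \<in> H \<and> y \<in> P ` Z}"
proof
  show "set_plus H Z \<subseteq> {x + y |x y. x \<in> H \<and> y \<in> P ` Z}"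
  proof
    fix v assume "v \<in> set_plus H Z"
    then obtain h z where v: "v = h + z" "h \<in> H" "z \<in> Z" by (auto simp: set_plus_def)
    have "v = (h + Q z) + P z" by (simp add: v P_def)
    moreover have "h + Q z \<in> H" using v Q_H Hsub by (simp add: subspace_add)
    ultimately show "v \<in> {x + y |x y. x \<in> H \<and> y \<in> P ` Z}" using v by blast
  qed
  show "{x + y |x y. x \<in> H \<and> y \<in> P ` Z} \<subseteq> set_plus H Z"
  proof
    fix v assume "v \<in> {x + y |x y. x \<in> H \<and> y \<in> P ` Z}"
    then obtain h z where v: "v = h + P z" "h \<in> H" "z \<in> Z" by auto
    have "v = (h - Q z) + z" by (simp add: v P_def)
    moreover have "h - Q z \<in> H" using v Q_H Hsub by (simp add: subspace_diff)
    ultimately show "v \<in> set_plus H Z" using v unfolding set_plus_def by blast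
  qed
qed

lemma Y_eq:
  assumes Z: "subspace Z"
  shows "set_plus H Z \<inter> W = P ` Z"
proof
  show "P ` Z \<subseteq> set_plus H Z \<inter> W" using S_eq[OF Z] P_W Hsub subspace_0 by fastforce
  show "set_plus H Z \<inter> W \<subseteq> P ` Z"
  proof
    fix x assume x: "x \<in> set_plus H Z \<inter> W"
    then obtain h z where v: "x = h + P z" "h \<in> H" "z \<in> Z" using S_eq[OF Z] by auto
    have "h = x - P z" using v by simp
    hence "h \<in> W" using x P_W W_sub by (simp add: subspace_diff)
    hence "h = 0" using HW v by auto
    thus "x \<in> P ` Z" using v by auto
  qed
qed

lemma Y_sub:
  assumes Z: "subspace Z" shows "subspace (P ` Z)"
proof -
  have "subspace (set_plus H Z)" unfolding set_plus_def using subspace_sums[OF Hsub Z] .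
  hence "subspace (set_plus H Z \<inter> W)" using W_sub by (rule subspace_inter)
  thus ?thesis by (simp only: Y_eq[OF Z])
qed

lemma q3_iff:
  assumes Z: "subspace Z"
  shows "q_plus B (set_plus H Z \<inter> W) \<ge> 1 \<longleftrightarrow> (\<exists>z\<in>Z. B (P z) (P z) > 0)"
  using q_plus_ge1[OF bl sym Y_sub[OF Z]] Y_eq[OF Z] by auto

lemma q2_iff:
  assumes Z: "subspace Z" and qW: "q_plus B W = 1"
  shows "q_plus B (set_plus H Z) = dim H + 1 \<longleftrightarrow> (\<exists>z\<in>Z. B (P z) (P z) > 0)"
proof -
  define Y where "Y = P ` Z"
  have Ys: "subspace Y" using Y_sub[OF Z] by (simp add: Y_def)
  have YW: "Y \<subseteq> W" using P_W by (auto simp: Y_def)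
  obtain Yb where Yb: "diag_basis B Y Yb" using diag_exists[OF bl sym Ys] by blast
  have finY: "finite Yb" and spY: "span Yb = Y" using Yb by (auto simp: diag_basis_def)
  have YbW: "Yb \<subseteq> W" using spY span_superset YW by blast
  have HY: "H \<inter> Y = {0}" using HW YW Hsub Ys subspace_0 by blast
  have o: "\<forall>a\<in>Hb. \<forall>c\<in>Yb. B a c = 0 \<and> B c a = 0" using B_H_W Hb_sub YbW by blast
  have D: "diag_basis B (set_plus H Z) (Hb \<union> Yb)"
    using diag_union(1)[OF Hb Yb HY o] S_eq[OF Z] by (simp add: Y_def)
  have "q_plus B (set_plus H Z) = card {b\<in>Hb \<union> Yb. B b b = 1}" using q_plus_eq[OF bl D] .
  also have "\<dots> = card {b\<in>Hb. B b b = 1} + card {b\<in>Yb. B b b = 1}"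
    using card_filter_Un[OF Hb_fin finY diag_union(2)[OF Hb Yb HY o]] .
  also have "{b\<in>Hb. B b b = 1} = Hb" using Hb_one by auto
  finally have qS: "q_plus B (set_plus H Z) = dim H + q_plus B Y" using dimH q_plus_eq[OF bl Yb] by simp
  have "q_plus B Y \<le> 1"
  proof -
    have "dim (span {b\<in>Yb. B b b = 1}) \<le> q_plus B W"
      using pos_span[OF bl Yb] YW by (intro q_plus_le[OF bl sym W_sub]) auto
    thus ?thesis using pos_span[OF bl Yb] q_plus_eq[OF bl Yb] qW by simp
  qed
  hence "q_plus B (set_plus H Z) = dim H + 1 \<longleftrightarrow> q_plus B Y \<ge> 1" using qS by auto
  also have "\<dots> \<longleftrightarrow> (\<exists>y\<in>Y. B y y > 0)" using q_plus_ge1[OF bl sym Ys] .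
  finally show ?thesis by (simp add: Y_def)
qed

lemma iv_of_T:
  assumes fr: "frame e" and T: "\<exists>z\<in>Z. B (P z) (P z) > 0" and Z: "subspace Z"
  shows "\<exists>z\<in>Z. \<forall>u\<in>Kp e. B z u > 0"
proof -
  obtain z where z: "z \<in> Z" "B (P z) (P z) > 0" using T by blast
  have "P z \<noteq> 0" using z bs by auto
  hence PK: "P z \<in> K" using P_W z by (simp add: K_def causal_cone_def)
  have KW: "u \<in> Kp e \<Longrightarrow> u \<in> W" for u by (auto simp: Kp_def K_def causal_cone_def)
  have gen: "\<forall>u\<in>Kp e. B y u > 0" if "B (P y) (P y) > 0" "B (P y) e > 0" for y
  proof
    fix u assume u: "u \<in> Kp e"
    have "B (P y) u > 0" using timelike_pos[OF fr P_W that u] .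
    thus "B y u > 0" using B_P[OF KW[OF u]] by simp
  qed
  show ?thesis
  proof (cases "B (P z) e > 0")
    case True
    thus ?thesis using gen[OF z(2) True] z(1) by blast
  next
    case False
    hence lt: "B (P z) e < 0" using K_ne[OF fr PK] by linarith
    have ne: "B (P (- z)) e > 0" using lt by (simp add: P_neg bs)
    have "B (P (- z)) (P (- z)) > 0" using z(2) by (simp add: P_neg bs)
    hence "\<forall>u\<in>Kp e. B (- z) u > 0" using gen ne by blast
    moreover have "- z \<in> Z" using subspace_neg[OF Z z(1)] .
    ultimately show ?thesis by blast
  qed
qed

lemma T_of_v:
  assumes fr: "frame e" and v: "orth B Z \<inter> Kp e = {}" and Z: "subspace Z"
  shows "\<exists>z\<in>Z. B (P z) (P z) > 0"
proof (rule ccontr)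
  assume "\<not> ?thesis"
  hence neg: "\<forall>y\<in>P ` Z. B y y \<le> 0" by auto
  have PW: "P ` Z \<subseteq> W" using P_W by auto
  have "\<exists>u\<in>Kp e. \<forall>y\<in>P ` Z. B y u = 0" using orth_exists[OF fr Y_sub[OF Z] PW neg] .
  then obtain u where u: "u \<in> Kp e" "\<forall>y\<in>P ` Z. B y u = 0" by blast
  have "u \<in> W" using u by (auto simp: Kp_def K_def causal_cone_def)
  hence "\<forall>z\<in>Z. B z u = 0"
  proof (intro ballI)
    fix z assume "u \<in> W" "z \<in> Z"
    have "B (P z) u = 0" using u(2) \<open>z \<in> Z\<close> by blast
    thus "B z u = 0" using B_P[OF \<open>u \<in> W\<close>, of z] by simp
  qed
  hence "u \<in> orth B Z" by (simp add: orth_def)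
  thus False using v u by blast
qed

lemma all_equiv:
  assumes fr: "frame e" and Z: "subspace Z" and qW: "q_plus B W = 1"
  shows "(extendable B (dim H + 1) Z H \<longleftrightarrow> q_plus B (set_plus H Z) = dim H + 1)
       \<and> (extendable B (dim H + 1) Z H \<longleftrightarrow> q_plus B (set_plus H Z \<inter> W) \<ge> 1)
       \<and> (extendable B (dim H + 1) Z H \<longleftrightarrow> (\<exists>z\<in>Z. \<forall>u\<in>Kp e. B z u > 0))
       \<and> (extendable B (dim H + 1) Z H \<longleftrightarrow> orth B Z \<inter> Kp e = {})"
proof -
  let ?E = "extendable B (dim H + 1) Z H"
  let ?T = "\<exists>z\<in>Z. B (P z) (P z) > 0"
  have iv_v: "orth B Z \<inter> Kp e = {}" if h: "\<exists>z\<in>Z. \<forall>u\<in>Kp e. B z u > 0"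
  proof (rule ccontr)
    assume "orth B Z \<inter> Kp e \<noteq> {}"
    then obtain u where u: "u \<in> orth B Z" "u \<in> Kp e" by blast
    obtain z where z: "z \<in> Z" "\<forall>u\<in>Kp e. B z u > 0" using h by blast
    have "B z u = 0" using u(1) z(1) by (simp add: orth_def)
    thus False using z(2) u(2) by fastforce
  qed
  have e1: "?E \<longleftrightarrow> ?T" by (rule ext_iff)
  have e2: "q_plus B (set_plus H Z) = dim H + 1 \<longleftrightarrow> ?T" by (rule q2_iff[OF Z qW])
  have e3: "q_plus B (set_plus H Z \<inter> W) \<ge> 1 \<longleftrightarrow> ?T" by (rule q3_iff[OF Z])
  have e4: "?T \<Longrightarrow> (\<exists>z\<in>Z. \<forall>u\<in>Kp e. B z u > 0)" by (rule iv_of_T[OF fr _ Z])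
  have e5: "orth B Z \<inter> Kp e = {} \<Longrightarrow> ?T" by (rule T_of_v[OF fr _ Z])
  show ?thesis using e1 e2 e3 e4 e5 iv_v by argo
qed

end

theorem lemma2:
  fixes B :: "'a::euclidean_space \<Rightarrow> 'a \<Rightarrow> real"
    and k l :: nat and Z H :: "'a set"
  assumes sig: "has_signature B k l"
    and k2: "k \<ge> 2" and l2: "l \<ge> 2"
    and Z: "subspace Z" and qZ: "q_plus B Z \<ge> 1"
    and H: "positive_plane B (k - 1) H"
  shows "minkowski_subspace B l (orth B H)
    \<and> card (components (causal_cone B (orth B H))) = 2
    \<and> (\<forall>C \<in> components (causal_cone B (orth B H)).
         (extendable B k Z H \<longleftrightarrow> q_plus B (set_plus H Z) = k)
       \<and> (extendable B k Z H \<longleftrightarrow> q_plus B (set_plus H Z \<inter> orth B H) \<ge> 1)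
       \<and> (extendable B k Z H \<longleftrightarrow> (\<exists>z\<in>Z. \<forall>u\<in>C. B z u > 0))
       \<and> (extendable B k Z H \<longleftrightarrow> orth B Z \<inter> C = {}))"
proof -
  have bl: "bilinear B" and sym: "\<forall>x y. B x y = B y x" and nd: "\<forall>x. (\<forall>y. B x y = 0) \<longrightarrow> x = 0"
    and qp: "q_plus B UNIV = k" and qm: "q_minus B UNIV = l"
    using sig by (auto simp: has_signature_def pseudo_euclidean_form_def)
  have Hs: "subspace H" and dH: "dim H = k - 1" and Hp: "\<forall>x\<in>H. x \<noteq> 0 \<longrightarrow> B x x > 0"
    using H by (auto simp: positive_plane_def)
  obtain Hb where Hb: "diag_basis B H Hb" using diag_exists[OF bl sym Hs] by blast
  interpret PE B H Hb using bl sym nd Hs Hp Hb by unfold_locales auto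
  have kk: "k = dim H + 1" using dH k2 by simp
  have qW: "q_plus B W = 1" using qplus_univ qp dH k2 by simp
  have oW: "orth B H = W" by (simp add: W_def)
  have mink: "minkowski_subspace B l (orth B H)"
    unfolding minkowski_subspace_def oW using W_sub W_nd qW qminus_univ qm by auto
  obtain e where fr: "frame e" using frame_exists[OF qW] by blast
  have comps: "components (causal_cone B (orth B H)) = {Kp e, Kp (- e)}"
    using components_K[OF fr] by (simp add: K_def oW)
  have card2: "card (components (causal_cone B (orth B H))) = 2"
    using comps Kp_distinct[OF fr] by simp
  have "\<forall>C \<in> components (causal_cone B (orth B H)).
         (extendable B k Z H \<longleftrightarrow> q_plus B (set_plus H Z) = k)
       \<and> (extendable B k Z H \<longleftrightarrow> q_plus B (set_plus H Z \<inter> orth B H) \<ge> 1)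
       \<and> (extendable B k Z H \<longleftrightarrow> (\<exists>z\<in>Z. \<forall>u\<in>C. B z u > 0))
       \<and> (extendable B k Z H \<longleftrightarrow> orth B Z \<inter> C = {})"
  proof
    fix C assume "C \<in> components (causal_cone B (orth B H))"
    then obtain f where f: "frame f" "C = Kp f" using comps fr frame_neg by auto
    show "(extendable B k Z H \<longleftrightarrow> q_plus B (set_plus H Z) = k)
       \<and> (extendable B k Z H \<longleftrightarrow> q_plus B (set_plus H Z \<inter> orth B H) \<ge> 1)
       \<and> (extendable B k Z H \<longleftrightarrow> (\<exists>z\<in>Z. \<forall>u\<in>C. B z u > 0))
       \<and> (extendable B k Z H \<longleftrightarrow> orth B Z \<inter> C = {})"
      using all_equiv[OF f(1) Z qW] unfolding kk[symmetric] oW f(2) .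
  qed
  thus ?thesis using mink card2 by blast
qed

end
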